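(* Let $\mathcal{S},\mathcal{A}$ be finite nonempty sets, $\lambda\in(0,1)$, $b>0$, $r_{sa}\in\mathbb{R}$, let $\bm{\nu}$ satisfy $\bm{\nu}_s\in\Delta(\mathcal{A})$ for each $s\in\mathcal{S}$, and for each $(s,a)$ let $\mathcal{U}_{sa}\subseteq\Delta(\mathcal{S})$ be a nonempty set over which the minima below are attained. For $\bm{x}\in(\mathbb{R}_{>0})^{\mathcal{S}}$ define $$\tilde t(\bm{x})_s=\sum_{a\in\mathcal{A}}\nu_{sa}\exp(b\,r_{sa})\min_{\bm{p}\in\mathcal{U}_{sa}}\prod_{s'\in\mathcal{S}}x_{s'}^{\lambda p_{s'}}.$$ Then for each $s\in\mathcal{S}$ the function $\bm{x}\mapsto\tilde t(\bm{x})_s$ is concave on $(\mathbb{R}_{>0})^{\mathcal{S}}$.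
   Context: $\Delta(\mathcal{X})$ denotes the probability simplex over a finite set $\mathcal{X}$. *)

theory Defs
  imports "HOL-Analysis.Analysis"
begin

definition prob_simplex :: "('x::finite \<Rightarrow> real) set" where
  "prob_simplex = {p. (\<forall>i. 0 \<le> p i) \<and> (\<Sum>i\<in>UNIV. p i) = 1}"

text \<open>The map t-tilde, component s. The minimum over U s a is written as an
infimum; the theorem assumes it is attained, so it is a minimum.\<close>
definition t_tilde ::
  "real \<Rightarrow> real \<Rightarrow> ('s::finite \<Rightarrow> 'a::finite \<Rightarrow> real) \<Rightarrow> ('s \<Rightarrow> 'a \<Rightarrow> real)
   \<Rightarrow> ('s \<Rightarrow> 'a \<Rightarrow> ('s \<Rightarrow> real) set) \<Rightarrow> real^'s \<Rightarrow> 's \<Rightarrow> real" where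
  "t_tilde lam b r \<nu> U x s =
     (\<Sum>a\<in>UNIV. \<nu> s a * exp (b * r s a) *
        Inf ((\<lambda>p. \<Prod>s'\<in>UNIV. (x $ s') powr (lam * p s')) ` U s a))"

end

theory Submission
  imports Defs
begin

lemma wamgm:
  fixes w a :: "'s::finite \<Rightarrow> real"
  assumes w0: "\<And>i. 0 \<le> w i" and W1: "sum w UNIV \<le> 1" and apos: "\<And>i. 0 < a i"
  shows "exp (\<Sum>i\<in>UNIV. w i * ln (a i)) \<le> (\<Sum>i\<in>UNIV. w i * a i) + (1 - sum w UNIV)"
proof -
  define M where "M = (\<Sum>i\<in>UNIV. w i * a i) + (1 - sum w UNIV)"
  have M0: "M > 0"
  proof (cases "sum w UNIV < 1")
    case True
    have "(\<Sum>i\<in>UNIV. w i * a i) \<ge> 0" by (intro sum_nonneg) (simp add: w0 apos less_imp_le)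
    then show ?thesis using True unfolding M_def by linarith
  next
    case False
    hence "sum w UNIV = 1" using W1 by linarith
    hence "\<exists>i. w i \<noteq> 0" by (metis sum.neutral zero_neq_one)
    then obtain j where "w j > 0" using w0 by (metis less_eq_real_def)
    hence "w j * a j > 0" using apos by simp
    moreover have "w j * a j \<le> (\<Sum>i\<in>UNIV. w i * a i)"
      by (rule member_le_sum) (auto simp: w0 apos less_imp_le)
    ultimately show ?thesis unfolding M_def using W1 by linarith
  qed
  have "(\<Sum>i\<in>UNIV. w i * ln (a i)) - ln M
        = (\<Sum>i\<in>UNIV. w i * ln (a i / M)) + (1 - sum w UNIV) * ln (1 / M)"
  proof -
    have e: "ln (a i / M) = ln (a i) - ln M" for i using apos[of i] M0 by (simp add: ln_div)
    have "(\<Sum>i\<in>UNIV. w i * ln (a i / M)) = (\<Sum>i\<in>UNIV. w i * ln (a i)) - sum w UNIV * ln M"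
      unfolding e by (simp add: right_diff_distrib sum_subtractf sum_distrib_right)
    moreover have "ln (1 / M) = - ln M" using M0 by (simp add: ln_inverse[symmetric] inverse_eq_divide)
    ultimately show ?thesis by (simp add: algebra_simps)
  qed
  also have "\<dots> \<le> (\<Sum>i\<in>UNIV. w i * (a i / M - 1)) + (1 - sum w UNIV) * (1 / M - 1)"
    apply (intro add_mono sum_mono mult_left_mono ln_le_minus_one)
    using M0 apos w0 W1 by auto
  also have "\<dots> = (M - (1 - sum w UNIV)) / M - sum w UNIV + (1 - sum w UNIV) * (1 / M - 1)"
    unfolding M_def using M0
    by (simp add: algebra_simps sum_subtractf sum_divide_distrib[symmetric] M_def)
  also have "\<dots> = 0" using M0 by (simp add: field_simps)
  finally have "(\<Sum>i\<in>UNIV. w i * ln (a i)) \<le> ln M" by simp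
  hence "exp (\<Sum>i\<in>UNIV. w i * ln (a i)) \<le> exp (ln M)" by simp
  thus ?thesis using M0 unfolding M_def by simp
qed

lemma prod_powr_exp:
  fixes w :: "'s::finite \<Rightarrow> real" and x :: "real^'s"
  assumes "\<And>i. 0 < x $ i"
  shows "(\<Prod>i\<in>UNIV. (x $ i) powr (w i)) = exp (\<Sum>i\<in>UNIV. w i * ln (x $ i))"
proof -
  have "(\<Prod>i\<in>UNIV. (x $ i) powr (w i)) = (\<Prod>i\<in>UNIV. exp (w i * ln (x $ i)))"
    using assms by (intro prod.cong) (auto simp: powr_def less_imp_neq[symmetric] mult.commute)
  thus ?thesis by (simp add: exp_sum)
qed

lemma geo_conc:
  fixes w :: "'s::finite \<Rightarrow> real" and x y :: "real^'s"
  assumes w0: "\<And>i. 0 \<le> w i" and W1: "sum w UNIV \<le> 1"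
    and xp: "\<And>i. 0 < x $ i" and yp: "\<And>i. 0 < y $ i"
    and u: "0 \<le> u" and v: "0 \<le> v" and uv: "u + v = 1"
  shows "u * (\<Prod>i\<in>UNIV. (x $ i) powr (w i)) + v * (\<Prod>i\<in>UNIV. (y $ i) powr (w i))
         \<le> (\<Prod>i\<in>UNIV. ((u *\<^sub>R x + v *\<^sub>R y) $ i) powr (w i))"
proof -
  define z where "z = u *\<^sub>R x + v *\<^sub>R y"
  have zi: "z $ i = u * x $ i + v * y $ i" for i unfolding z_def by simp
  have zp: "0 < z $ i" for i
  proof (cases "u = 0")
    case True thus ?thesis using uv yp[of i] by (simp add: zi)
  next
    case False thus ?thesis using u v xp[of i] yp[of i] zi[of i]
      by (smt (verit) mult_pos_pos mult_nonneg_nonneg)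
  qed
  define E where "E q = (\<Sum>i\<in>UNIV. w i * ln (q $ i))" for q :: "real^'s"
  have key: "exp (E q) \<le> exp (E z) * ((\<Sum>i\<in>UNIV. w i * (q $ i / z $ i)) + (1 - sum w UNIV))"
    if qp: "\<And>i. 0 < q $ i" for q
  proof -
    have "E q = E z + (\<Sum>i\<in>UNIV. w i * ln (q $ i / z $ i))"
      unfolding E_def sum.distrib[symmetric] using qp zp
      by (intro sum.cong) (auto simp: ln_div algebra_simps less_imp_neq[symmetric])
    hence "exp (E q) = exp (E z) * exp (\<Sum>i\<in>UNIV. w i * ln (q $ i / z $ i))"
      by (simp add: exp_add)
    also have "\<dots> \<le> exp (E z) * ((\<Sum>i\<in>UNIV. w i * (q $ i / z $ i)) + (1 - sum w UNIV))"
      by (intro mult_left_mono wamgm) (auto simp: w0 W1 qp zp)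
    finally show ?thesis .
  qed
  have "u * exp (E x) + v * exp (E y)
     \<le> u * (exp (E z) * ((\<Sum>i\<in>UNIV. w i * (x $ i / z $ i)) + (1 - sum w UNIV)))
      + v * (exp (E z) * ((\<Sum>i\<in>UNIV. w i * (y $ i / z $ i)) + (1 - sum w UNIV)))"
    by (intro add_mono mult_left_mono key) (auto simp: xp yp u v)
  also have "\<dots> = exp (E z) * ((\<Sum>i\<in>UNIV. w i * ((u * x $ i + v * y $ i) / z $ i)) + (u + v) * (1 - sum w UNIV))"
    by (simp add: algebra_simps sum_distrib_left sum.distrib add_divide_distrib)
      (simp add: sum_distrib_left[symmetric] sum_distrib_right[symmetric])
  also have "(\<Sum>i\<in>UNIV. w i * ((u * x $ i + v * y $ i) / z $ i)) = sum w UNIV"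
    using zp by (intro sum.cong) (auto simp: zi[symmetric] less_imp_neq[symmetric])
  also have "exp (E z) * (sum w UNIV + (u + v) * (1 - sum w UNIV)) = exp (E z)"
    using uv by simp
  finally show ?thesis
    using prod_powr_exp[OF xp, of w] prod_powr_exp[OF yp, of w] prod_powr_exp[OF zp, of w]
    unfolding E_def z_def by simp
qed

theorem lemma3:
  fixes lam b :: real
    and r \<nu> :: "'s::finite \<Rightarrow> 'a::finite \<Rightarrow> real"
    and U :: "'s \<Rightarrow> 'a \<Rightarrow> ('s \<Rightarrow> real) set"
  assumes "0 < lam" "lam < 1" "0 < b"
    and "\<And>s. \<nu> s \<in> prob_simplex"
    and "\<And>s a. U s a \<subseteq> prob_simplex" "\<And>s a. U s a \<noteq> {}"
    and "\<And>s a x. (\<forall>i. 0 < x $ i) \<Longrightarrow>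
           \<exists>p\<in>U s a. \<forall>q\<in>U s a.
             (\<Prod>s'\<in>UNIV. (x $ s') powr (lam * p s')) \<le> (\<Prod>s'\<in>UNIV. (x $ s') powr (lam * q s'))"
  shows "concave_on {x. \<forall>i. 0 < x $ i} (\<lambda>x. t_tilde lam b r \<nu> U x s)"
proof -
  define f where "f p x = (\<Prod>s'\<in>UNIV. (x $ s') powr (lam * p s'))" for p :: "'s \<Rightarrow> real" and x :: "real^'s"
  define I where "I a x = Inf ((\<lambda>p. f p x) ` U s a)" for a x
  have Iatt: "\<exists>p\<in>U s a. I a x = f p x \<and> (\<forall>q\<in>U s a. f p x \<le> f q x)"
    if xp: "\<forall>i. 0 < x $ i" for a x
  proof -
    obtain p where p: "p \<in> U s a" "\<forall>q\<in>U s a. f p x \<le> f q x"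
      using assms(7)[OF xp, of s a] unfolding f_def by blast
    have "I a x = f p x" unfolding I_def
      by (rule cInf_eq_minimum) (use p in auto)
    thus ?thesis using p by blast
  qed
  have fconc: "u * f p x + v * f p y \<le> f p (u *\<^sub>R x + v *\<^sub>R y)"
    if "p \<in> U s a" "\<forall>i. 0 < x $ i" "\<forall>i. 0 < y $ i" "0 \<le> u" "0 \<le> v" "u + v = 1" for p a x y u v
  proof -
    have ps: "p \<in> prob_simplex" using assms(5) that(1) by blast
    have "sum (\<lambda>i. lam * p i) UNIV = lam" using ps
      by (simp add: prob_simplex_def sum_distrib_left[symmetric])
    hence W: "sum (\<lambda>i. lam * p i) UNIV \<le> 1" using assms(2) by simp
    show ?thesis unfolding f_def
      by (rule geo_conc[OF _ W]) (use that ps assms(1) in \<open>auto simp: prob_simplex_def\<close>)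
  qed
  have Iconc: "u * I a x + v * I a y \<le> I a (u *\<^sub>R x + v *\<^sub>R y)"
    if xp: "\<forall>i. 0 < x $ i" and yp: "\<forall>i. 0 < y $ i" and uv: "0 \<le> u" "0 \<le> v" "u + v = 1" for a x y u v
  proof -
    have zp: "\<forall>i. 0 < (u *\<^sub>R x + v *\<^sub>R y) $ i"
    proof
      fix i
      show "0 < (u *\<^sub>R x + v *\<^sub>R y) $ i"
      proof (cases "u = 0")
        case True thus ?thesis using uv yp by simp
      next
        case False thus ?thesis using uv xp yp
          by simp (smt (verit) mult_pos_pos mult_nonneg_nonneg)
      qed
    qed
    obtain pz where pz: "pz \<in> U s a" "I a (u *\<^sub>R x + v *\<^sub>R y) = f pz (u *\<^sub>R x + v *\<^sub>R y)"
      using Iatt[OF zp] by blast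
    obtain px where px: "I a x = f px x" "\<forall>q\<in>U s a. f px x \<le> f q x" using Iatt[OF xp] by blast
    obtain py where py: "I a y = f py y" "\<forall>q\<in>U s a. f py y \<le> f q y" using Iatt[OF yp] by blast
    have "u * I a x + v * I a y \<le> u * f pz x + v * f pz y"
      using px py pz(1) uv by (intro add_mono mult_left_mono) auto
    also have "\<dots> \<le> f pz (u *\<^sub>R x + v *\<^sub>R y)" by (rule fconc[OF pz(1) xp yp uv])
    finally show ?thesis using pz(2) by simp
  qed
  have cvx: "convex {x::real^'s. \<forall>i. 0 < x $ i}"
    unfolding convex_def
  proof (intro ballI allI impI)
    fix x y :: "real^'s" and u v :: real
    assume xp: "x \<in> {x. \<forall>i. 0 < x $ i}" and yp: "y \<in> {x. \<forall>i. 0 < x $ i}"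
      and uv: "0 \<le> u" "0 \<le> v" "u + v = 1"
    show "u *\<^sub>R x + v *\<^sub>R y \<in> {x. \<forall>i. 0 < x $ i}"
    proof (clarify)
      fix i
      show "0 < (u *\<^sub>R x + v *\<^sub>R y) $ i"
      proof (cases "u = 0")
        case True thus ?thesis using uv yp by simp
      next
        case False thus ?thesis using uv xp yp
          by simp (smt (verit) mult_pos_pos mult_nonneg_nonneg)
      qed
    qed
  qed
  have tt: "t_tilde lam b r \<nu> U x s = (\<Sum>a\<in>UNIV. \<nu> s a * exp (b * r s a) * I a x)" for x
    unfolding t_tilde_def I_def f_def by simp
  have c0: "0 \<le> \<nu> s a * exp (b * r s a)" for a
    using assms(4)[of s] by (simp add: prob_simplex_def)
  show ?thesis
    unfolding concave_on_iff
  proof (intro conjI cvx ballI allI impI)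
    fix x y :: "real^'s" and u v :: real
    assume xp: "x \<in> {x. \<forall>i. 0 < x $ i}" and yp: "y \<in> {x. \<forall>i. 0 < x $ i}"
      and u: "0 \<le> u" and v: "0 \<le> v" and uv: "u + v = 1"
    have "u * t_tilde lam b r \<nu> U x s + v * t_tilde lam b r \<nu> U y s
        = (\<Sum>a\<in>UNIV. \<nu> s a * exp (b * r s a) * (u * I a x + v * I a y))"
      unfolding tt by (simp add: sum_distrib_left sum.distrib algebra_simps)
    also have "\<dots> \<le> (\<Sum>a\<in>UNIV. \<nu> s a * exp (b * r s a) * I a (u *\<^sub>R x + v *\<^sub>R y))"
      using xp yp u v uv by (intro sum_mono mult_left_mono Iconc c0) auto
    finally show "u * t_tilde lam b r \<nu> U x s + v * t_tilde lam b r \<nu> U y s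
        \<le> t_tilde lam b r \<nu> U (u *\<^sub>R x + v *\<^sub>R y) s" unfolding tt .
  qed
qed

end
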